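(* For any constant $\delta\in(0,1)$ there exists an infinite family of graphs $\{G_n\}$ such that $G_n$ has $n$ nodes and contains a clique of size $\delta n$, but for all $\epsilon<\min\left\{\frac{1-\delta}{1+\delta},\frac19\right\}$ and for sufficiently large $n$, the shingles algorithm cannot find an $\epsilon$-near clique with at least $(1-\epsilon)\delta n$ nodes in $G_n$ (i.e., whatever the random IDs drawn, no candidate set it can output is an $\epsilon$-near clique with at least $(1-\epsilon)\delta n$ nodes).
   Context: Each undirected edge $\{u,v\}$ is counted as two directed edges. For $0\le\epsilon\le1$, a set $D$ of nodes of a graph $(V,E)$ is an $\epsilon$-near clique if $|\{(u,v)\in D\times D : \{u,v\}\in E\}|\ge(1-\epsilon)|D|(|D|-1)$. The shingles algorithm (a distributed algorithm): each node picks a random ID from a space large enough that collisions are negligible and sends it to all neighbors; each node then takes as its label the smallest ID among itself and its neighbors; nodes with the same label form a candidate set; each candidate set computes its density by having every member send its degree within the set to the set's leader (the node whose ID is the label), and only sets of sufficient size and density survive; conflicts between overlapping candidate sets are resolved in favor of the larger set, and for equal sizes in favor of the smaller label. The output near-cliques are the surviving candidate sets. *)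

theory Defs
  imports Complex_Main
begin

definition simple_graph :: "nat \<Rightarrow> (nat \<Rightarrow> nat \<Rightarrow> bool) \<Rightarrow> bool" where
  "simple_graph n E \<longleftrightarrow>
     (\<forall>u v. E u v \<longrightarrow> E v u) \<and> (\<forall>u. \<not> E u u) \<and>
     (\<forall>u v. E u v \<longrightarrow> u < n \<and> v < n)"

definition is_clique :: "(nat \<Rightarrow> nat \<Rightarrow> bool) \<Rightarrow> nat set \<Rightarrow> bool" where
  "is_clique E C \<longleftrightarrow> (\<forall>u\<in>C. \<forall>v\<in>C. u \<noteq> v \<longrightarrow> E u v)"

text \<open>Number of directed edges inside D (each undirected edge counted twice).\<close>
definition dir_edges :: "(nat \<Rightarrow> nat \<Rightarrow> bool) \<Rightarrow> nat set \<Rightarrow> nat" where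
  "dir_edges E D = card {(u, v). u \<in> D \<and> v \<in> D \<and> E u v}"

definition near_clique :: "real \<Rightarrow> (nat \<Rightarrow> nat \<Rightarrow> bool) \<Rightarrow> nat set \<Rightarrow> bool" where
  "near_clique \<epsilon> E D \<longleftrightarrow>
     real (dir_edges E D) \<ge> (1 - \<epsilon>) * real (card D) * (real (card D) - 1)"

definition shingle_label :: "nat \<Rightarrow> (nat \<Rightarrow> nat \<Rightarrow> bool) \<Rightarrow> (nat \<Rightarrow> nat) \<Rightarrow> nat \<Rightarrow> nat" where
  "shingle_label n E ids v = Min (ids ` ({v} \<union> {u. u < n \<and> E v u}))"

definition candidate_sets :: "nat \<Rightarrow> (nat \<Rightarrow> nat \<Rightarrow> bool) \<Rightarrow> (nat \<Rightarrow> nat) \<Rightarrow> nat set set" where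
  "candidate_sets n E ids =
     {D. \<exists>v<n. D = {u. u < n \<and> shingle_label n E ids u = shingle_label n E ids v}}"

end

theory Submission
  imports Defs
begin


definition offd :: "nat set \<Rightarrow> (nat \<times> nat) set" where
  "offd A = {(u,v). u\<in>A \<and> v\<in>A \<and> u\<noteq>v}"

lemma card_offd: assumes "finite A" shows "card (offd A) = card A * (card A - 1)"
proof -
  have e: "offd A = A \<times> A - (\<lambda>a. (a,a)) ` A" unfolding offd_def by auto
  have s: "(\<lambda>a. (a,a)) ` A \<subseteq> A \<times> A" by auto
  have c: "card ((\<lambda>a. (a,a)) ` A) = card A" by (rule card_image) (auto simp: inj_on_def)
  have "card (offd A) = card A * card A - card A"
    using e s assms c by (simp add: card_Diff_subset card_cartesian_product)
  thus ?thesis by (simp add: diff_mult_distrib2)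
qed

lemma finite_offd: "finite A \<Longrightarrow> finite (offd A)"
  by (rule finite_subset[of _ "A \<times> A"]) (auto simp: offd_def)

lemma edges_le:
  assumes "{(u,v). u\<in>D \<and> v\<in>D \<and> E u v} \<subseteq> offd X \<union> (A \<times> B) \<union> (B \<times> A)"
    "finite X" "finite A" "finite B"
  shows "dir_edges E D \<le> card X * (card X - 1) + card A * card B + card B * card A"
proof -
  have "dir_edges E D \<le> card (offd X \<union> (A \<times> B) \<union> (B \<times> A))"
    unfolding dir_edges_def using assms by (intro card_mono) (auto intro: finite_offd)
  also have "\<dots> \<le> card (offd X \<union> (A \<times> B)) + card (B \<times> A)" by (rule card_Un_le)
  also have "\<dots> \<le> card (offd X) + card (A \<times> B) + card (B \<times> A)" using card_Un_le by simp
  finally show ?thesis using assms by (simp add: card_offd card_cartesian_product)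
qed

lemma R1:
  fixes H G T \<delta> \<epsilon> :: real
  assumes "T = H + G" "0 \<le> H" "0 \<le> G" "H \<le> \<delta>*T + 1" "0 \<le> \<epsilon>"
    "((1-\<delta>) - \<epsilon>*(1+\<delta>)) * T > 3" "0 < T"
  shows "2*H*(2*H-1) + 2*H*G < (1-\<epsilon>)*(2*H+G)*(2*H+G-1)"
proof -
  have "(1+\<epsilon>)*H \<le> (1+\<epsilon>)*(\<delta>*T+1)" using assms by (intro mult_left_mono) auto
  hence f1: "H + \<epsilon>*H \<le> \<delta>*T + \<epsilon>*\<delta>*T + 1 + \<epsilon>" by (simp add: algebra_simps)
  have f2: "3 < T - \<delta>*T - \<epsilon>*T - \<epsilon>*\<delta>*T" using assms(6) by (simp add: algebra_simps)
  have f3: "\<epsilon>*T = \<epsilon>*H + \<epsilon>*G" using assms(1) by (simp add: algebra_simps)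
  have b: "(1-\<epsilon>)*(2*H+G) - 2*H - (1-\<epsilon>) > 0"
    using f1 f2 f3 assms(1) by (simp add: algebra_simps)
  have X: "2*H+G > 0" using assms by linarith
  have p: "(2*H+G) * ((1-\<epsilon>)*(2*H+G) - 2*H - (1-\<epsilon>)) > 0" using b X by simp
  have id: "(1-\<epsilon>)*(2*H+G)*(2*H+G-1) - (2*H*(2*H-1) + 2*H*G)
      = (2*H+G) * ((1-\<epsilon>)*(2*H+G) - 2*H - (1-\<epsilon>)) + 2*H"
    by (simp add: algebra_simps)
  show ?thesis using id p assms(2) by linarith
qed

lemma R2:
  fixes H G T \<delta> \<epsilon> :: real
  assumes "T = H + G" "0 \<le> H" "0 \<le> \<epsilon>" "\<epsilon> < 1/9" "0 < \<delta>" "\<delta> < 1"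
    "2*(1-\<epsilon>)*\<delta> \<le> 1" "G \<ge> (1-\<delta>)*T - 1" "T \<ge> 100"
  shows "H*(H-1) + 2*H*G < (1-\<epsilon>)*T*(T-1)"
proof -
  have "\<epsilon>*\<delta> \<le> (1/9)*\<delta>" using assms by (intro mult_right_mono) auto
  hence d: "1-\<delta> \<ge> 7/16" using assms(7) by (simp add: algebra_simps)
  have "(7/16)*T \<le> (1-\<delta>)*T" using d assms(9) by (intro mult_right_mono) auto
  hence g0: "0 \<le> (1-\<delta>)*T - 1" using assms(9) by linarith
  have "((1-\<delta>)*T - 1)^2 \<le> G^2" using g0 assms(8) by (intro power_mono) auto
  moreover have "((1-\<delta>)*T - 1)^2 = (1-\<delta>)^2*T^2 - 2*((1-\<delta>)*T) + 1"
    by (simp add: power2_eq_square algebra_simps)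
  moreover have "(1-\<delta>)*T \<le> T" using mult_right_mono[of "1-\<delta>" 1 T] assms by simp
  moreover have "(7/16)^2 * T^2 \<le> (1-\<delta>)^2*T^2" using d by (intro mult_right_mono power_mono) auto
  moreover have "\<epsilon> * T^2 \<le> (1/9) * T^2" using assms by (intro mult_right_mono) auto
  ultimately have g: "G^2 - \<epsilon>*T^2 \<ge> (185/2304)*T^2 - 2*T" by (simp add: power2_eq_square)
  have "(185/2304)*T^2 - 2*T - T > 0"
  proof -
    have "(185/2304)*T \<ge> (185/2304)*100" using assms(9) by simp
    hence "(185/2304)*T - 3 > 0" by simp
    hence "T * ((185/2304)*T - 3) > 0" using assms(9) by simp
    thus ?thesis by (simp add: power2_eq_square algebra_simps)
  qed
  moreover have "(1-\<epsilon>)*T*(T-1) - (H*(H-1) + 2*H*G) = G^2 - \<epsilon>*T^2 - (1-\<epsilon>)*T + H"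
    using assms(1) by (simp add: power2_eq_square algebra_simps)
  moreover have "\<epsilon>*T \<ge> 0" using assms by simp
  ultimately show ?thesis using g assms(2) by (simp add: algebra_simps)
qed

lemma R3:
  fixes H d \<epsilon> :: real
  assumes "0 \<le> \<epsilon>" "\<epsilon> < 1/9" "1 \<le> H" "H \<le> 3/4*d" "2 \<le> d"
  shows "H*(H-1) < (1-\<epsilon>)*d*(d-1)"
proof -
  have "H*(H-1) \<le> (3/4*d)*(3/4*d-1)" using assms by (intro mult_mono) auto
  hence a: "H*H - H \<le> 9/16*(d*d) - 3/4*d" by (simp add: algebra_simps)
  have "(8/9)*(d*(d-1)) \<le> (1-\<epsilon>)*(d*(d-1))" using assms by (intro mult_right_mono) auto
  moreover have "d*(d-1) = d*d - d" by (simp add: algebra_simps)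
  moreover have "(1-\<epsilon>)*d*(d-1) = (1-\<epsilon>)*(d*(d-1))" by simp
  ultimately have b: "8/9*(d*d) - 8/9*d \<le> (1-\<epsilon>)*d*(d-1)" by linarith
  have c: "d*d \<ge> 2*d" using assms by simp
  have "H*(H-1) = H*H - H" by (simp add: algebra_simps)
  with a b c assms show ?thesis by linarith
qed




lemma fin_nb: "finite ((ids::nat\<Rightarrow>nat) ` ({v} \<union> {u. u < (n::nat) \<and> E v u}))"
  by (rule finite_imageI) (rule finite_subset[of _ "{v} \<union> {..<n}"], auto)

lemma lab_eq:
  assumes "x = v \<or> (x < n \<and> E v x)" "\<And>u. u = v \<or> (u < n \<and> E v u) \<Longrightarrow> ids x \<le> ids u"
  shows "shingle_label n E ids v = ids x"
  unfolding shingle_label_def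
  by (rule Min_eqI) (use fin_nb assms in auto)

lemma lab_in: "\<exists>x. (x = v \<or> (x < n \<and> E v x)) \<and> shingle_label n E ids v = ids x"
proof -
  have "shingle_label n E ids v \<in> ids ` ({v} \<union> {u. u < n \<and> E v u})"
    unfolding shingle_label_def by (rule Min_in) (use fin_nb in auto)
  then obtain x where "x \<in> {v} \<union> {u. u < n \<and> E v u}" "shingle_label n E ids v = ids x"
    by (rule imageE)
  thus ?thesis by blast
qed

lemma lab_le: "u = v \<or> (u < n \<and> E v u) \<Longrightarrow> shingle_label n E ids v \<le> ids u"
  unfolding shingle_label_def by (rule Min_le) (use fin_nb in auto)

lemma cand_center:
  assumes "D \<in> candidate_sets n E ids" "inj_on ids {0..<n}"
  shows "\<exists>x<n. (\<forall>v\<in>D. v<n \<and> (x = v \<or> E v x) \<and> (\<forall>u. (u = v \<or> (u<n \<and> E v u)) \<longrightarrow> ids x \<le> ids u))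
     \<and> D = {u. u<n \<and> shingle_label n E ids u = ids x}"
proof -
  obtain w where w: "w<n" "D = {u. u<n \<and> shingle_label n E ids u = shingle_label n E ids w}"
    using assms(1) unfolding candidate_sets_def by blast
  obtain x where x: "x = w \<or> (x < n \<and> E w x)" "shingle_label n E ids w = ids x"
    using lab_in by blast
  have xn: "x < n" using x(1) w(1) by blast
  have D: "D = {u. u<n \<and> shingle_label n E ids u = ids x}" using w(2) x(2) by simp
  have "\<forall>v\<in>D. v<n \<and> (x = v \<or> E v x) \<and> (\<forall>u. (u = v \<or> (u<n \<and> E v u)) \<longrightarrow> ids x \<le> ids u)"
  proof
    fix v assume v: "v \<in> D"
    hence vn: "v < n" and lv: "shingle_label n E ids v = ids x" using D by simp_all
    obtain x' where x': "x' = v \<or> (x' < n \<and> E v x')" "shingle_label n E ids v = ids x'"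
      using lab_in by blast
    have "x' < n" using x'(1) vn by blast
    moreover have "ids x' = ids x" using x'(2) lv by simp
    ultimately have "x' = x" using xn assms(2) unfolding inj_on_def by simp
    hence c1: "x = v \<or> E v x" using x'(1) by blast
    have "\<forall>u. (u = v \<or> (u<n \<and> E v u)) \<longrightarrow> ids x \<le> ids u"
      using lab_le[of _ v n E ids] lv by metis
    thus "v<n \<and> (x = v \<or> E v x) \<and> (\<forall>u. (u = v \<or> (u<n \<and> E v u)) \<longrightarrow> ids x \<le> ids u)"
      using vn c1 by blast
  qed
  thus ?thesis using xn D by blast
qed




definition adj :: "nat \<Rightarrow> nat \<Rightarrow> bool" where
  "adj a b \<longleftrightarrow> (a \<le> 1 \<and> b \<le> 1) \<or> (a=0 \<and> b=2) \<or> (a=2 \<and> b=0) \<or> (a=1 \<and> b=3) \<or> (a=3 \<and> b=1)"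

definition sw :: "nat \<Rightarrow> nat" where
  "sw a = (if a=0 then 1 else if a=1 then 0 else if a=2 then 3 else if a=3 then 2 else a)"

lemma sw_simps[simp]: "sw a = 0 \<longleftrightarrow> a = 1" "sw a = 1 \<longleftrightarrow> a = 0" "sw a = 2 \<longleftrightarrow> a = 3" "sw a = 3 \<longleftrightarrow> a = 2"
  by (auto simp: sw_def)

lemma adj_sw: "adj (sw a) (sw b) = adj a b"
  unfolding adj_def sw_def by auto

lemma core:
  fixes bl :: "nat \<Rightarrow> nat"
  assumes Edef: "\<And>u v. E u v \<longleftrightarrow> u<n \<and> v<n \<and> u\<noteq>v \<and> adj (bl u) (bl v)"
    and x: "x < n" "bl x = 0"
    and hD: "D = {u. u<n \<and> shingle_label n E ids u = ids x}"
    and hv: "\<forall>v\<in>D. (x = v \<or> E v x) \<and> (\<forall>u. (u = v \<or> (u<n \<and> E v u)) \<longrightarrow> ids x \<le> ids u)"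
  shows "D = {u. u<n \<and> (bl u = 0 \<or> bl u = 2)} \<or> D = {u. u<n \<and> (bl u = 0 \<or> bl u = 1 \<or> bl u = 2)}
    \<or> D \<subseteq> {u. u<n \<and> (bl u = 1 \<or> bl u = 2)}"
proof -
  have sub: "\<And>v. v \<in> D \<Longrightarrow> v < n \<and> (bl v = 0 \<or> bl v = 1 \<or> bl v = 2)"
  proof -
    fix v assume "v \<in> D"
    hence "x = v \<or> E v x" "v < n" using hv hD by auto
    thus "v < n \<and> (bl v = 0 \<or> bl v = 1 \<or> bl v = 2)" using x by (auto simp: Edef adj_def)
  qed
  show ?thesis
  proof (cases "\<exists>v\<in>D. bl v = 0")
    case True
    then obtain v where v: "v \<in> D" "bl v = 0" by blast
    have vn: "v < n" using sub v by blast
    have all: "\<And>u. u < n \<Longrightarrow> bl u = 0 \<or> bl u = 1 \<or> bl u = 2 \<Longrightarrow> ids x \<le> ids u"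
    proof -
      fix u assume u: "u < n" "bl u = 0 \<or> bl u = 1 \<or> bl u = 2"
      hence "u = v \<or> (u<n \<and> E v u)" using v vn by (auto simp: Edef adj_def)
      thus "ids x \<le> ids u" using hv v by blast
    qed
    have in1: "\<And>v'. v' < n \<Longrightarrow> bl v' = 0 \<or> bl v' = 2 \<Longrightarrow> v' \<in> D"
    proof -
      fix v' assume v': "v' < n" "bl v' = 0 \<or> bl v' = 2"
      have "shingle_label n E ids v' = ids x"
      proof (rule lab_eq)
        show "x = v' \<or> (x < n \<and> E v' x)" using x v' by (auto simp: Edef adj_def)
        fix u assume "u = v' \<or> (u<n \<and> E v' u)"
        hence "u < n \<and> (bl u = 0 \<or> bl u = 1 \<or> bl u = 2)" using v' by (auto simp: Edef adj_def)
        thus "ids x \<le> ids u" using all by blast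
      qed
      thus "v' \<in> D" using hD v' by auto
    qed
    show ?thesis
    proof (cases "\<exists>w\<in>D. bl w = 1")
      case True
      then obtain w where w: "w \<in> D" "bl w = 1" by blast
      have wn: "w < n" using sub w by blast
      have in2: "\<And>v'. v' < n \<Longrightarrow> bl v' = 1 \<Longrightarrow> v' \<in> D"
      proof -
        fix v' assume v': "v' < n" "bl v' = 1"
        have "shingle_label n E ids v' = ids x"
        proof (rule lab_eq)
          show "x = v' \<or> (x < n \<and> E v' x)" using x v' by (auto simp: Edef adj_def)
          fix u assume "u = v' \<or> (u<n \<and> E v' u)"
          hence "u = w \<or> (u<n \<and> E w u)" using v' w wn by (auto simp: Edef adj_def)
          thus "ids x \<le> ids u" using hv w by blast
        qed
        thus "v' \<in> D" using hD v' by auto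
      qed
      have "D = {u. u<n \<and> (bl u = 0 \<or> bl u = 1 \<or> bl u = 2)}"
        using sub in1 in2 by blast
      thus ?thesis by blast
    next
      case False
      have "D = {u. u<n \<and> (bl u = 0 \<or> bl u = 2)}"
        using sub in1 False by blast
      thus ?thesis by blast
    qed
  next
    case False
    thus ?thesis using sub by blast
  qed
qed

lemma coreB:
  fixes bl :: "nat \<Rightarrow> nat"
  assumes Edef: "\<And>u v. E u v \<longleftrightarrow> u<n \<and> v<n \<and> u\<noteq>v \<and> adj (bl u) (bl v)"
    and x: "bl x = 2"
    and hv: "\<forall>v\<in>D. v < n \<and> (x = v \<or> E v x)"
  shows "D \<subseteq> insert x {u. u<n \<and> bl u = 0}"
proof
  fix v assume "v \<in> D"
  hence "v < n" "x = v \<or> E v x" using hv by auto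
  thus "v \<in> insert x {u. u<n \<and> bl u = 0}" using x by (auto simp: Edef adj_def)
qed




lemma real_mm1: "1 \<le> a \<Longrightarrow> real (a * (a - 1)) = real a * (real a - 1)"
  by (simp add: of_nat_diff)

lemma final:
  fixes bl :: "nat \<Rightarrow> nat" and h g n :: nat and \<delta> \<epsilon> :: real
  assumes Edef: "\<And>u v. E u v \<longleftrightarrow> u<n \<and> v<n \<and> u\<noteq>v \<and> adj (bl u) (bl v)"
    and c0: "card {u. u<n \<and> bl u = 0} = h" and c1: "card {u. u<n \<and> bl u = 1} = h"
    and c2: "card {u. u<n \<and> bl u = 2} = g"
    and nn: "real n = 2*(real h + real g)"
    and hl: "\<delta>*(real h + real g) \<le> real h" and hu: "real h \<le> \<delta>*(real h + real g) + 1"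
    and t1: "3 \<le> \<delta>*(real h + real g)"
    and t2: "((1-\<delta>) - \<epsilon>*(1+\<delta>)) * (real h + real g) > 3"
    and t3: "real h + real g \<ge> 100"
    and e0: "0 \<le> \<epsilon>" and e1: "\<epsilon> < 1/9" and d0: "0 < \<delta>" and d1: "\<delta> < 1"
    and shape: "D = {u. u<n \<and> (bl u = 0 \<or> bl u = 2)} \<or> D = {u. u<n \<and> (bl u = 0 \<or> bl u = 1 \<or> bl u = 2)}
    \<or> D \<subseteq> {u. u<n \<and> (bl u = 1 \<or> bl u = 2)} \<or> (\<exists>x. D \<subseteq> insert x {u. u<n \<and> bl u = 0})"
  shows "\<not> (near_clique \<epsilon> E D \<and> (1-\<epsilon>)*\<delta>*real n \<le> real (card D))"
proof
  assume "near_clique \<epsilon> E D \<and> (1-\<epsilon>)*\<delta>*real n \<le> real (card D)"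
  hence NC: "(1 - \<epsilon>) * real (card D) * (real (card D) - 1) \<le> real (dir_edges E D)"
    and SZ: "(1-\<epsilon>)*\<delta>*real n \<le> real (card D)" unfolding near_clique_def by auto
  define P0 where "P0 = {u. u<n \<and> bl u = 0}"
  define P1 where "P1 = {u. u<n \<and> bl u = 1}"
  define P2 where "P2 = {u. u<n \<and> bl u = 2}"
  have f0: "finite P0" "finite P1" "finite P2" unfolding P0_def P1_def P2_def by auto
  define H where "H = real h"
  define G where "G = real g"
  define T where "T = H + G"
  have HT: "\<delta>*T \<le> H" "H \<le> \<delta>*T + 1" "3 \<le> \<delta>*T" "T \<ge> 100" "((1-\<delta>) - \<epsilon>*(1+\<delta>)) * T > 3"
    using hl hu t1 t2 t3 unfolding H_def G_def T_def by auto
  have Tpos: "0 < T" using HT(4) by linarith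
  have h1: "1 \<le> h" using HT unfolding H_def by linarith
  have G0: "0 \<le> G" "0 \<le> H" unfolding G_def H_def by auto
  have "(8/9)*(\<delta>*(2*T)) \<le> (1-\<epsilon>)*(\<delta>*(2*T))"
    using e1 d0 HT by (intro mult_right_mono) auto
  hence SZ': "(16/9)*(\<delta>*T) \<le> real (card D)" using SZ nn unfolding T_def H_def G_def
    by (simp add: algebra_simps)
  from shape consider (s1) "D = P0 \<union> P2" | (s2) "D = (P0 \<union> P1) \<union> P2" | (s3) "D \<subseteq> P1 \<union> P2"
    | (s4) x where "D \<subseteq> insert x P0"
    unfolding P0_def P1_def P2_def by (auto; blast)
  thus False
  proof cases
    case s1
    have "{(u,v). u\<in>D \<and> v\<in>D \<and> E u v} \<subseteq> offd P0 \<union> (P0 \<times> P2) \<union> (P2 \<times> P0)"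
    proof (rule subsetI)
      fix p assume "p \<in> {(u,v). u\<in>D \<and> v\<in>D \<and> E u v}"
      then obtain u v where pe: "p = (u,v)" and uv: "u \<in> D" "v \<in> D" "E u v" by blast
      hence a: "u<n" "v<n" "u\<noteq>v" "adj (bl u) (bl v)" using Edef by auto
      have "bl u = 0 \<or> bl u = 2" "bl v = 0 \<or> bl v = 2" using uv(1,2) s1 unfolding P0_def P2_def by auto
      hence "(bl u = 0 \<and> bl v = 0) \<or> (bl u = 0 \<and> bl v = 2) \<or> (bl u = 2 \<and> bl v = 0)"
        using a(4) unfolding adj_def by auto
      thus "p \<in> offd P0 \<union> (P0 \<times> P2) \<union> (P2 \<times> P0)"
        by (elim disjE conjE) (simp_all add: pe offd_def P0_def P2_def a)
    qed
    from edges_le[OF this f0(1) f0(1) f0(3)]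
    have "dir_edges E D \<le> h*(h-1) + h*g + g*h" using c0 c2 unfolding P0_def P2_def by simp
    hence "real (dir_edges E D) \<le> real (h*(h-1)) + real (h*g) + real (g*h)" by linarith
    hence ed: "real (dir_edges E D) \<le> H*(H-1) + 2*H*G" using real_mm1[OF h1] unfolding H_def G_def
      by (simp add: algebra_simps)
    have "card D = card P0 + card P2" unfolding s1
      by (rule card_Un_disjoint) (use f0 in \<open>auto simp: P0_def P2_def\<close>)
    hence "card D = h + g" using c0 c2 unfolding P0_def P2_def by simp
    hence cD: "real (card D) = T" unfolding T_def H_def G_def by simp
    have "(1-\<epsilon>)*\<delta>*(2*T) \<le> 1*T" using SZ nn cD unfolding T_def H_def G_def by simp
    hence "(2*(1-\<epsilon>)*\<delta>)*T \<le> 1*T" by (simp add: algebra_simps)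
    moreover have "0 < T" using HT(4) by linarith
    ultimately have dd: "2*(1-\<epsilon>)*\<delta> \<le> 1" by (rule mult_right_le_imp_le)
    have Gb: "G \<ge> (1-\<delta>)*T - 1" using HT(2) T_def by (simp add: algebra_simps)
    have "H*(H-1) + 2*H*G < (1-\<epsilon>)*T*(T-1)"
      by (rule R2[OF T_def G0(2) e0 e1 d0 d1 dd Gb HT(4)])
    thus False using NC ed cD by (simp add: mult.assoc)
  next
    case s2
    have "{(u,v). u\<in>D \<and> v\<in>D \<and> E u v} \<subseteq> offd (P0 \<union> P1) \<union> (P0 \<times> P2) \<union> (P2 \<times> P0)"
    proof (rule subsetI)
      fix p assume "p \<in> {(u,v). u\<in>D \<and> v\<in>D \<and> E u v}"
      then obtain u v where pe: "p = (u,v)" and uv: "u \<in> D" "v \<in> D" "E u v" by blast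
      hence a: "u<n" "v<n" "u\<noteq>v" "adj (bl u) (bl v)" using Edef by auto
      have "bl u = 0 \<or> bl u = 1 \<or> bl u = 2" "bl v = 0 \<or> bl v = 1 \<or> bl v = 2" using uv(1,2) s2 unfolding P0_def P1_def P2_def by auto
      hence "((bl u = 0 \<or> bl u = 1) \<and> (bl v = 0 \<or> bl v = 1)) \<or> (bl u = 0 \<and> bl v = 2) \<or> (bl u = 2 \<and> bl v = 0)"
        using a(4) unfolding adj_def by auto
      thus "p \<in> offd (P0 \<union> P1) \<union> (P0 \<times> P2) \<union> (P2 \<times> P0)"
        by (elim disjE conjE) (simp_all add: pe offd_def P0_def P1_def P2_def a)
    qed
    moreover have "finite (P0 \<union> P1)" using f0 by simp
    ultimately have "dir_edges E D \<le> card (P0 \<union> P1) * (card (P0 \<union> P1) - 1) + card P0 * card P2 + card P2 * card P0"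
      using edges_le f0 by blast
    moreover have "card (P0 \<union> P1) = card P0 + card P1"
      by (rule card_Un_disjoint) (use f0 in \<open>auto simp: P0_def P1_def\<close>)
    hence "card (P0 \<union> P1) = 2*h" using c0 c1 unfolding P0_def P1_def by simp
    ultimately have "dir_edges E D \<le> (2*h)*(2*h-1) + h*g + g*h" using c0 c2 unfolding P0_def P2_def by simp
    hence "real (dir_edges E D) \<le> real ((2*h)*(2*h-1)) + real (h*g) + real (g*h)" by linarith
    moreover have "real ((2*h)*(2*h-1)) = (2*H)*(2*H-1)" using real_mm1[of "2*h"] h1 unfolding H_def by simp
    ultimately have ed: "real (dir_edges E D) \<le> 2*H*(2*H-1) + 2*H*G" unfolding H_def G_def
      by (simp add: algebra_simps)
    have "card D = card (P0 \<union> P1) + card P2" unfolding s2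
      by (rule card_Un_disjoint) (use f0 in \<open>auto simp: P0_def P1_def P2_def\<close>)
    hence "card D = 2*h + g" using c2 \<open>card (P0 \<union> P1) = 2*h\<close> unfolding P2_def by simp
    hence cD: "real (card D) = 2*H+G" unfolding H_def G_def by simp
    have "2*H*(2*H-1) + 2*H*G < (1-\<epsilon>)*(2*H+G)*(2*H+G-1)"
      by (rule R1[OF T_def G0(2) G0(1) HT(2) e0 HT(5) Tpos])
    thus False using NC ed cD by (simp add: mult.assoc)
  next
    case s3
    have "{(u,v). u\<in>D \<and> v\<in>D \<and> E u v} \<subseteq> offd P1 \<union> ({} \<times> {}) \<union> ({} \<times> {})"
    proof (rule subsetI)
      fix p assume "p \<in> {(u,v). u\<in>D \<and> v\<in>D \<and> E u v}"
      then obtain u v where pe: "p = (u,v)" and uv: "u \<in> D" "v \<in> D" "E u v" by blast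
      hence a: "u<n" "v<n" "u\<noteq>v" "adj (bl u) (bl v)" using Edef by auto
      have "bl u = 1 \<or> bl u = 2" "bl v = 1 \<or> bl v = 2" using uv(1,2) s3 unfolding P1_def P2_def by auto
      hence "bl u = 1 \<and> bl v = 1" using a(4) unfolding adj_def by auto
      thus "p \<in> offd P1 \<union> ({} \<times> {}) \<union> ({} \<times> {})"
        by (simp add: pe offd_def P1_def a)
    qed
    from edges_le[OF this f0(2)]
    have "dir_edges E D \<le> h*(h-1)" using c1 unfolding P1_def by simp
    hence ed: "real (dir_edges E D) \<le> H*(H-1)" using real_mm1[OF h1] unfolding H_def
      by (metis of_nat_le_iff)
    have "H*(H-1) < (1-\<epsilon>)*real (card D)*(real (card D)-1)"
    proof (rule R3[OF e0 e1])
      show "1 \<le> H" using HT by linarith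
      show "H \<le> 3/4 * real (card D)" using HT SZ' by linarith
      show "2 \<le> real (card D)" using HT SZ' by linarith
    qed
    thus False using NC ed by simp
  next
    case s4
    have "card D \<le> card (insert x P0)" using s4 f0 by (intro card_mono) auto
    also have "\<dots> \<le> h + 1" using card_insert_le_m1[of "card P0" "P0" x] c0 f0 unfolding P0_def
      by (simp add: card_insert_if)
    finally have "real (card D) \<le> H + 1" unfolding H_def by simp
    thus False using SZ' HT by linarith
  qed
qed




definition hh :: "real \<Rightarrow> nat \<Rightarrow> nat" where "hh \<delta> n = nat \<lceil>\<delta> * real n / 2\<rceil>"
definition gg :: "real \<Rightarrow> nat \<Rightarrow> nat" where "gg \<delta> n = n div 2 - hh \<delta> n"
definition bk :: "nat \<Rightarrow> nat \<Rightarrow> nat \<Rightarrow> nat" where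
  "bk h g u = (if u < h then 0 else if u < 2*h then 1 else if u < 2*h+g then 2 else 3)"
definition Gr :: "real \<Rightarrow> nat \<Rightarrow> nat \<Rightarrow> nat \<Rightarrow> bool" where
  "Gr \<delta> n u v \<longleftrightarrow> u<n \<and> v<n \<and> u\<noteq>v \<and> adj (bk (hh \<delta> n) (gg \<delta> n) u) (bk (hh \<delta> n) (gg \<delta> n) v)"

lemma bk_sets:
  fixes h g n :: nat assumes "n = 2*h+2*g"
  shows "card {u. u<n \<and> bk h g u = 0} = h" "card {u. u<n \<and> bk h g u = 1} = h"
    "card {u. u<n \<and> bk h g u = 2} = g" "card {u. u<n \<and> bk h g u = 3} = g"
proof -
  have "{u. u<n \<and> bk h g u = 0} = {..<h}" using assms by (auto simp: bk_def)
  thus "card {u. u<n \<and> bk h g u = 0} = h" by simp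
  have "{u. u<n \<and> bk h g u = 1} = {h..<2*h}" using assms by (auto simp: bk_def)
  thus "card {u. u<n \<and> bk h g u = 1} = h" by simp
  have "{u. u<n \<and> bk h g u = 2} = {2*h..<2*h+g}" using assms by (auto simp: bk_def)
  thus "card {u. u<n \<and> bk h g u = 2} = g" by simp
  have "{u. u<n \<and> bk h g u = 3} = {2*h+g..<n}" using assms by (auto simp: bk_def)
  thus "card {u. u<n \<and> bk h g u = 3} = g" using assms by simp
qed

lemma par:
  assumes "0 < \<delta>" "\<delta> < 1" "even n" "2/(1-\<delta>) \<le> real n"
  shows "2*hh \<delta> n + 2*gg \<delta> n = n" "\<delta>*real n/2 \<le> real (hh \<delta> n)" "real (hh \<delta> n) \<le> \<delta>*real n/2 + 1"
proof -
  have x0: "0 \<le> \<delta>*real n/2" using assms by simp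
  have c: "0 \<le> \<lceil>\<delta>*real n/2\<rceil>" using x0 by simp
  have r: "real (hh \<delta> n) = real_of_int \<lceil>\<delta>*real n/2\<rceil>" unfolding hh_def using c by simp
  show "\<delta>*real n/2 \<le> real (hh \<delta> n)" using r by simp
  show u: "real (hh \<delta> n) \<le> \<delta>*real n/2 + 1" using r ceiling_correct[of "\<delta>*real n/2"] by linarith
  have "2 \<le> (1-\<delta>)*real n" using assms by (simp add: field_simps)
  hence "real (hh \<delta> n) \<le> real n / 2" using u by (simp add: algebra_simps)
  moreover have "real (n div 2) = real n / 2" using assms(3) by (auto elim: evenE)
  ultimately have "hh \<delta> n \<le> n div 2" by linarith
  thus "2*hh \<delta> n + 2*gg \<delta> n = n" unfolding gg_def using assms(3) by (auto elim: evenE)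
qed

lemma sw_Suc0[simp]: "sw a = Suc 0 \<longleftrightarrow> a = 0" by (auto simp: sw_def)

lemma adj_sym: "adj a b = adj b a" unfolding adj_def by auto

theorem claim3p1:
  fixes \<delta> :: real
  assumes "0 < \<delta>" and "\<delta> < 1"
  shows "\<exists>S :: nat set. \<exists>G :: nat \<Rightarrow> (nat \<Rightarrow> nat \<Rightarrow> bool).
     infinite S \<and>
     (\<forall>n\<in>S. simple_graph n (G n) \<and>
        (\<exists>C. C \<subseteq> {0..<n} \<and> is_clique (G n) C \<and> real (card C) \<ge> \<delta> * real n)) \<and>
     (\<forall>\<epsilon>::real. 0 \<le> \<epsilon> \<and> \<epsilon> < min ((1 - \<delta>) / (1 + \<delta>)) (1 / 9) \<longrightarrow>
        (\<exists>N. \<forall>n\<in>S. n \<ge> N \<longrightarrow>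
           (\<forall>ids :: nat \<Rightarrow> nat. inj_on ids {0..<n} \<longrightarrow>
              (\<forall>D\<in>candidate_sets n (G n) ids.
                 \<not> (near_clique \<epsilon> (G n) D \<and>
                    real (card D) \<ge> (1 - \<epsilon>) * \<delta> * real n)))))"
proof -
  define M where "M = nat \<lceil>2/(1-\<delta>)\<rceil>"
  define S where "S = {n::nat. even n \<and> M \<le> n}"
  have Sp: "\<And>n. n \<in> S \<Longrightarrow> even n \<and> 2/(1-\<delta>) \<le> real n"
  proof -
    fix n assume "n \<in> S"
    hence "even n" "M \<le> n" unfolding S_def by auto
    moreover have "2/(1-\<delta>) \<le> real M" unfolding M_def by linarith
    ultimately show "even n \<and> 2/(1-\<delta>) \<le> real n" by linarith
  qed
  have inf: "infinite S"
  proof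
    assume "finite S"
    then obtain m where m: "S \<subseteq> {..m}" by (auto simp: finite_nat_set_iff_bounded_le)
    have "2*(m+M+1) \<in> S" unfolding S_def by auto
    thus False using m by auto
  qed
  have part2: "\<forall>n\<in>S. simple_graph n (Gr \<delta> n) \<and>
        (\<exists>C. C \<subseteq> {0..<n} \<and> is_clique (Gr \<delta> n) C \<and> real (card C) \<ge> \<delta> * real n)"
  proof
    fix n assume nS: "n \<in> S"
    have p: "2*hh \<delta> n + 2*gg \<delta> n = n" "\<delta>*real n/2 \<le> real (hh \<delta> n)"
      using par[OF assms] Sp[OF nS] by auto
    have sg: "simple_graph n (Gr \<delta> n)"
      unfolding simple_graph_def Gr_def using adj_sym by blast
    have "{..<2*hh \<delta> n} \<subseteq> {0..<n}" using p by auto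
    moreover have "is_clique (Gr \<delta> n) {..<2*hh \<delta> n}"
      unfolding is_clique_def Gr_def using p by (auto simp: bk_def adj_def)
    moreover have "real (card {..<2*hh \<delta> n}) \<ge> \<delta> * real n" using p by simp
    ultimately show "simple_graph n (Gr \<delta> n) \<and>
        (\<exists>C. C \<subseteq> {0..<n} \<and> is_clique (Gr \<delta> n) C \<and> real (card C) \<ge> \<delta> * real n)"
      using sg by blast
  qed
  have part3: "\<forall>\<epsilon>::real. 0 \<le> \<epsilon> \<and> \<epsilon> < min ((1 - \<delta>) / (1 + \<delta>)) (1 / 9) \<longrightarrow>
        (\<exists>N. \<forall>n\<in>S. n \<ge> N \<longrightarrow>
           (\<forall>ids :: nat \<Rightarrow> nat. inj_on ids {0..<n} \<longrightarrow>
              (\<forall>D\<in>candidate_sets n (Gr \<delta> n) ids.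
                 \<not> (near_clique \<epsilon> (Gr \<delta> n) D \<and>
                    real (card D) \<ge> (1 - \<epsilon>) * \<delta> * real n))))"
  proof (intro allI impI)
    fix \<epsilon> :: real assume e: "0 \<le> \<epsilon> \<and> \<epsilon> < min ((1 - \<delta>) / (1 + \<delta>)) (1 / 9)"
    hence e0: "0 \<le> \<epsilon>" and e1: "\<epsilon> < 1/9" and e2: "\<epsilon> < (1 - \<delta>) / (1 + \<delta>)" by auto
    have "\<epsilon>*(1+\<delta>) < 1-\<delta>" using e2 assms by (simp add: pos_less_divide_eq)
    define c0 where "c0 = (1-\<delta>) - \<epsilon>*(1+\<delta>)"
    have c0p: "0 < c0" unfolding c0_def using \<open>\<epsilon>*(1+\<delta>) < 1-\<delta>\<close> by linarith
    define N where "N = nat \<lceil>2*(3/\<delta> + 4/c0 + 100)\<rceil>"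
    show "\<exists>N. \<forall>n\<in>S. n \<ge> N \<longrightarrow>
           (\<forall>ids :: nat \<Rightarrow> nat. inj_on ids {0..<n} \<longrightarrow>
              (\<forall>D\<in>candidate_sets n (Gr \<delta> n) ids.
                 \<not> (near_clique \<epsilon> (Gr \<delta> n) D \<and>
                    real (card D) \<ge> (1 - \<epsilon>) * \<delta> * real n)))"
    proof (intro exI[of _ N] ballI impI allI)
      fix n ids D assume nS: "n \<in> S" and nN: "N \<le> n" and inj: "inj_on ids {0..<n}"
        and DC: "D \<in> candidate_sets n (Gr \<delta> n) ids"
      define h where "h = hh \<delta> n"
      define g where "g = gg \<delta> n"
      have p: "2*h + 2*g = n" "\<delta>*real n/2 \<le> real h" "real h \<le> \<delta>*real n/2 + 1"
        using par[OF assms] Sp[OF nS] unfolding h_def g_def by auto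
      define T where "T = real h + real g"
      have nT: "real n = 2*T" using p(1) unfolding T_def by (metis of_nat_add of_nat_mult of_nat_numeral distrib_left)
      have "2*(3/\<delta> + 4/c0 + 100) \<le> real N" unfolding N_def by linarith
      hence TT: "3/\<delta> + 4/c0 + 100 \<le> T" using nN nT by simp
      have pos1: "0 \<le> 3/\<delta>" "0 \<le> 4/c0" using assms c0p by auto
      have T1: "3/\<delta> \<le> T" "4/c0 \<le> T" using TT pos1 by linarith+
      have "\<delta>*(3/\<delta>) \<le> \<delta>*T" using T1 assms by (intro mult_left_mono) auto
      hence t1: "3 \<le> \<delta>*T" using assms by simp
      have "c0*(4/c0) \<le> c0*T" using T1 c0p by (intro mult_left_mono) auto
      moreover have "c0*(4/c0) = 4" using c0p by simp
      ultimately have "c0 * T > 3" by linarith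
      hence t2: "((1-\<delta>) - \<epsilon>*(1+\<delta>)) * T > 3" unfolding c0_def by simp
      have t3: "T \<ge> 100" using TT pos1 by linarith
      have hl: "\<delta>*T \<le> real h" "real h \<le> \<delta>*T + 1" using p nT by auto
      have Ed: "\<And>u v. Gr \<delta> n u v \<longleftrightarrow> u<n \<and> v<n \<and> u\<noteq>v \<and> adj (bk h g u) (bk h g v)"
        unfolding Gr_def h_def g_def by simp
      have Ed': "\<And>u v. Gr \<delta> n u v \<longleftrightarrow> u<n \<and> v<n \<and> u\<noteq>v \<and> adj (sw (bk h g u)) (sw (bk h g v))"
        unfolding Ed adj_sw by simp
      have cs: "card {u. u<n \<and> bk h g u = 0} = h" "card {u. u<n \<and> bk h g u = 1} = h"
        "card {u. u<n \<and> bk h g u = 2} = g" "card {u. u<n \<and> bk h g u = 3} = g"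
        using bk_sets[of n h g] p(1) by auto
      have cs': "card {u. u<n \<and> sw (bk h g u) = 0} = h" "card {u. u<n \<and> sw (bk h g u) = 1} = h"
        "card {u. u<n \<and> sw (bk h g u) = 2} = g" using cs by simp_all
      have nn: "real n = 2*(real h + real g)" using nT T_def by simp
      have hl': "\<delta>*(real h + real g) \<le> real h" "real h \<le> \<delta>*(real h + real g) + 1" "3 \<le> \<delta>*(real h + real g)"
        "((1-\<delta>) - \<epsilon>*(1+\<delta>)) * (real h + real g) > 3" "real h + real g \<ge> 100"
        using hl t1 t2 t3 unfolding T_def by auto
      note fin = final[OF Ed cs(1) cs(2) cs(3) nn hl' e0 e1 assms]
      note fin' = final[OF Ed' cs'(1) cs'(2) cs'(3) nn hl' e0 e1 assms]
      obtain x where x: "x < n" and hv: "\<forall>v\<in>D. v<n \<and> (x = v \<or> Gr \<delta> n v x) \<and>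
          (\<forall>u. (u = v \<or> (u<n \<and> Gr \<delta> n v u)) \<longrightarrow> ids x \<le> ids u)"
        and hD: "D = {u. u<n \<and> shingle_label n (Gr \<delta> n) ids u = ids x}"
        using cand_center[OF DC inj] by blast
      have hv1: "\<forall>v\<in>D. (x = v \<or> Gr \<delta> n v x) \<and> (\<forall>u. (u = v \<or> (u<n \<and> Gr \<delta> n v u)) \<longrightarrow> ids x \<le> ids u)"
        using hv by blast
      have hv2: "\<forall>v\<in>D. v<n \<and> (x = v \<or> Gr \<delta> n v x)" using hv by blast
      have "bk h g x = 0 \<or> bk h g x = 1 \<or> bk h g x = 2 \<or> bk h g x = 3" by (auto simp: bk_def)
      thus "\<not> (near_clique \<epsilon> (Gr \<delta> n) D \<and> real (card D) \<ge> (1 - \<epsilon>) * \<delta> * real n)"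
      proof (elim disjE)
        assume b: "bk h g x = 0"
        show ?thesis using fin core[OF Ed x b hD hv1] by blast
      next
        assume b: "bk h g x = 1"
        hence b': "sw (bk h g x) = 0" by simp
        show ?thesis using fin' core[OF Ed' x b' hD hv1] by blast
      next
        assume b: "bk h g x = 2"
        show ?thesis using fin coreB[OF Ed b hv2] by blast
      next
        assume b: "bk h g x = 3"
        hence b': "sw (bk h g x) = 2" by simp
        show ?thesis using fin' coreB[OF Ed' b' hv2] by blast
      qed
    qed
  qed
  show ?thesis using inf part2 part3 by blast
qed


end
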